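(* Let $H=(V,E)$ be an unweighted hypergraph of rank $r$ on $n$ vertices and $k$ a positive integer. Suppose $\textsc{Partition}(G,t)$ is a procedure that, given a hypergraph $G$ and integer $t$, returns a $2t$-light $t$-partition of $G$. Consider the algorithm $\textsc{WeakEdges}(H,k)$: set $E'=\emptyset$; repeat $1+\log_2 n$ times: $E'\leftarrow E'\cup\textsc{Partition}(H,2rk)$ and $H\leftarrow H-E'$; return $E'$. Then $\textsc{WeakEdges}(H,k)$ returns a $4rk$-light set $E'$ (with respect to the input hypergraph $H$) that contains all the $k$-weak edges of $H$, using $O(\log n)$ calls to $\textsc{Partition}$.
   Context: A hypergraph $H=(V,E)$ has edges that are subsets of $V$; its rank is $\max_{e\in E}|e|$. For $U\subseteq V$, $H[U]=(U,\{e\in E:e\subseteq U\})$; for $A\subseteq V$, $\delta_H(A)$ is the set of edges meeting both $A$ and $V\setminus A$; $\lambda(H)=\min_{\emptyset\subsetneq A\subsetneq V}|\delta_H(A)|$. The strength of $e$ is $\gamma_H(e)=\max_{e\subseteq U\subseteq V}\lambda(H[U])$; $e$ is $k$-weak if $\gamma_H(e)<k$. $\kappa(G)$ is the number of connected components of $G$. A set $E'\subseteq E(G)$ is $\ell$-light if $|E'|\le\ell(\kappa(G-E')-\kappa(G))$. An edge $e$ of $G$ is $t$-crisp if there is $X\subseteq V(G)$ with $e\in\delta_G(X)$ and $|\delta_G(X)|<t$. A $t$-partition of $G$ is a set of edges of $G$ containing all $t$-crisp edges of $G$. *)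

theory Defs
  imports Complex_Main "HOL-Library.Extended_Nat"
begin

text \<open>A hypergraph is given by a vertex set V and a set E of edge identifiers;
  a fixed incidence map ends assigns to each edge identifier its vertex set
  (so parallel edges are allowed). Deleting edges only shrinks E.\<close>

definition hypergraph :: "('e \<Rightarrow> 'a set) \<Rightarrow> 'a set \<Rightarrow> 'e set \<Rightarrow> bool" where
  "hypergraph ends V E \<longleftrightarrow> finite V \<and> finite E \<and> (\<forall>e\<in>E. ends e \<noteq> {} \<and> ends e \<subseteq> V)"

definition hrank :: "('e \<Rightarrow> 'a set) \<Rightarrow> 'e set \<Rightarrow> nat" where
  "hrank ends E = Max (insert 0 ((\<lambda>e. card (ends e)) ` E))"

definition induced_edges :: "('e \<Rightarrow> 'a set) \<Rightarrow> 'e set \<Rightarrow> 'a set \<Rightarrow> 'e set" where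
  "induced_edges ends E U = {e\<in>E. ends e \<subseteq> U}"

definition cut :: "('e \<Rightarrow> 'a set) \<Rightarrow> 'a set \<Rightarrow> 'e set \<Rightarrow> 'a set \<Rightarrow> 'e set" where
  "cut ends V E A = {e\<in>E. ends e \<inter> A \<noteq> {} \<and> ends e \<inter> (V - A) \<noteq> {}}"

text \<open>Global edge connectivity lambda(H); the minimum over an empty family is infinity.\<close>
definition edge_conn :: "('e \<Rightarrow> 'a set) \<Rightarrow> 'a set \<Rightarrow> 'e set \<Rightarrow> enat" where
  "edge_conn ends V E = (INF A\<in>{A. {} \<subset> A \<and> A \<subset> V}. enat (card (cut ends V E A)))"

definition strength :: "('e \<Rightarrow> 'a set) \<Rightarrow> 'a set \<Rightarrow> 'e set \<Rightarrow> 'e \<Rightarrow> enat" where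
  "strength ends V E e =
     (SUP U\<in>{U. ends e \<subseteq> U \<and> U \<subseteq> V}. edge_conn ends U (induced_edges ends E U))"

definition k_weak :: "('e \<Rightarrow> 'a set) \<Rightarrow> 'a set \<Rightarrow> 'e set \<Rightarrow> nat \<Rightarrow> 'e \<Rightarrow> bool" where
  "k_weak ends V E k e \<longleftrightarrow> e \<in> E \<and> strength ends V E e < enat k"

definition adj :: "('e \<Rightarrow> 'a set) \<Rightarrow> 'a set \<Rightarrow> 'e set \<Rightarrow> ('a \<times> 'a) set" where
  "adj ends V E = {(u, v). u \<in> V \<and> v \<in> V \<and> (\<exists>e\<in>E. u \<in> ends e \<and> v \<in> ends e)}"

definition ncomp :: "('e \<Rightarrow> 'a set) \<Rightarrow> 'a set \<Rightarrow> 'e set \<Rightarrow> nat" where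
  "ncomp ends V E = card (V // ((adj ends V E)\<^sup>*))"

definition light :: "('e \<Rightarrow> 'a set) \<Rightarrow> 'a set \<Rightarrow> 'e set \<Rightarrow> nat \<Rightarrow> 'e set \<Rightarrow> bool" where
  "light ends V E l F \<longleftrightarrow> F \<subseteq> E \<and>
     int (card F) \<le> int l * (int (ncomp ends V (E - F)) - int (ncomp ends V E))"

definition crisp :: "('e \<Rightarrow> 'a set) \<Rightarrow> 'a set \<Rightarrow> 'e set \<Rightarrow> nat \<Rightarrow> 'e \<Rightarrow> bool" where
  "crisp ends V E t e \<longleftrightarrow> (\<exists>X\<subseteq>V. e \<in> cut ends V E X \<and> card (cut ends V E X) < t)"

definition t_partition :: "('e \<Rightarrow> 'a set) \<Rightarrow> 'a set \<Rightarrow> 'e set \<Rightarrow> nat \<Rightarrow> 'e set \<Rightarrow> bool" where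
  "t_partition ends V E t F \<longleftrightarrow> F \<subseteq> E \<and> (\<forall>e\<in>E. crisp ends V E t e \<longrightarrow> e \<in> F)"

fun weak_edges_iter ::
  "('a set \<Rightarrow> 'e set \<Rightarrow> nat \<Rightarrow> 'e set) \<Rightarrow> 'a set \<Rightarrow> 'e set \<Rightarrow> nat \<Rightarrow> nat \<Rightarrow> 'e set" where
  "weak_edges_iter P V E t 0 = {}"
| "weak_edges_iter P V E t (Suc i) =
     weak_edges_iter P V E t i \<union> P V (E - weak_edges_iter P V E t i) t"

definition weak_edges ::
  "('e \<Rightarrow> 'a set) \<Rightarrow> ('a set \<Rightarrow> 'e set \<Rightarrow> nat \<Rightarrow> 'e set) \<Rightarrow> 'a set \<Rightarrow> 'e set \<Rightarrow> nat \<Rightarrow> 'e set" where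
  "weak_edges ends P V E k =
     weak_edges_iter P V E (2 * hrank ends E * k) (1 + nat \<lceil>log 2 (real (card V))\<rceil>)"

end

theory Submission
  imports Defs
begin

lemma conn_ge:
  "enat k \<le> edge_conn ends U F \<longleftrightarrow> (\<forall>A. {} \<subset> A \<and> A \<subset> U \<longrightarrow> k \<le> card (cut ends U F A))"
  unfolding edge_conn_def by (auto simp: le_INF_iff)

locale setting =
  fixes ends :: "'e \<Rightarrow> 'a set" and V :: "'a set" and E :: "'e set" and k :: nat
  assumes H: "hypergraph ends V E" and kpos: "k > 0"
begin

lemma finV: "finite V" and finE: "finite E" and endsV: "e \<in> E \<Longrightarrow> ends e \<subseteq> V"
  and endsne: "e \<in> E \<Longrightarrow> ends e \<noteq> {}"
  using H unfolding hypergraph_def by auto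

definition K where "K = {U. U \<subseteq> V \<and> enat k \<le> edge_conn ends U (induced_edges ends E U)}"

lemma K_iff: "U \<in> K \<longleftrightarrow> U \<subseteq> V \<and> (\<forall>A. {} \<subset> A \<and> A \<subset> U \<longrightarrow> k \<le> card (cut ends U (induced_edges ends E U) A))"
  unfolding K_def conn_ge by auto

lemma cut_mono:
  assumes "U1 \<subseteq> U"
  shows "cut ends U1 (induced_edges ends E U1) (A \<inter> U1) \<subseteq> cut ends U (induced_edges ends E U) A"
proof
  fix e assume "e \<in> cut ends U1 (induced_edges ends E U1) (A \<inter> U1)"
  hence e: "e \<in> E" "ends e \<subseteq> U1" "ends e \<inter> (A \<inter> U1) \<noteq> {}" "ends e \<inter> (U1 - A \<inter> U1) \<noteq> {}"
    unfolding cut_def induced_edges_def by auto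
  show "e \<in> cut ends U (induced_edges ends E U) A"
    unfolding cut_def induced_edges_def using e assms by blast
qed

lemma fin_cut: "finite (cut ends U (induced_edges ends E U) A)"
  using finE unfolding cut_def induced_edges_def by auto

lemma K_cut:
  assumes "U1 \<in> K" "U1 \<subseteq> U" "A \<inter> U1 \<noteq> {}" "U1 - A \<noteq> {}"
  shows "k \<le> card (cut ends U (induced_edges ends E U) A)"
proof -
  have "k \<le> card (cut ends U1 (induced_edges ends E U1) (A \<inter> U1))"
  proof -
    have "{} \<subset> A \<inter> U1 \<and> A \<inter> U1 \<subset> U1" using assms(3,4) by blast
    thus ?thesis using assms(1) unfolding K_iff by blast
  qed
  also have "\<dots> \<le> card (cut ends U (induced_edges ends E U) A)"
    by (rule card_mono[OF fin_cut cut_mono[OF assms(2)]])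
  finally show ?thesis .
qed

lemma K_union:
  assumes "U1 \<in> K" "U2 \<in> K" "U1 \<inter> U2 \<noteq> {}"
  shows "U1 \<union> U2 \<in> K"
  unfolding K_iff
proof (intro conjI allI impI)
  show "U1 \<union> U2 \<subseteq> V" using assms unfolding K_def by auto
  fix A assume A: "{} \<subset> A \<and> A \<subset> U1 \<union> U2"
  show "k \<le> card (cut ends (U1 \<union> U2) (induced_edges ends E (U1 \<union> U2)) A)"
  proof (cases "A \<inter> U1 \<noteq> {} \<and> U1 - A \<noteq> {}")
    case True thus ?thesis using K_cut[OF assms(1)] by blast
  next
    case F1: False
    show ?thesis
    proof (cases "A \<inter> U2 \<noteq> {} \<and> U2 - A \<noteq> {}")
      case True thus ?thesis using K_cut[OF assms(2)] by blast
    next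
      case F2: False
      obtain x where x: "x \<in> U1" "x \<in> U2" using assms(3) by blast
      have False
      proof (cases "x \<in> A")
        case True
        hence "U1 \<subseteq> A" "U2 \<subseteq> A" using F1 F2 x by blast+
        thus False using A by blast
      next
        case False
        hence "A \<inter> U1 = {}" "A \<inter> U2 = {}" using F1 F2 x by blast+
        thus False using A by blast
      qed
      thus ?thesis ..
    qed
  qed
qed

lemma single_K: "v \<in> V \<Longrightarrow> {v} \<in> K"
  unfolding K_iff by auto

definition cls where "cls v = \<Union>{U\<in>K. v \<in> U}"

lemma finK: "finite K"
proof -
  have "K \<subseteq> Pow V" unfolding K_def by auto
  thus ?thesis using finV finite_subset by blast
qed

lemma Union_K:
  assumes "finite F" "F \<noteq> {}" "F \<subseteq> {U\<in>K. v \<in> U}"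
  shows "\<Union>F \<in> K"
  using assms
proof (induction F rule: finite_ne_induct)
  case (singleton x) thus ?case by auto
next
  case (insert x F)
  have "x \<union> \<Union>F \<in> K"
    by (rule K_union) (use insert in auto)
  thus ?case by simp
qed

lemma cls_K: "v \<in> V \<Longrightarrow> cls v \<in> K"
  unfolding cls_def by (rule Union_K[of _ v]) (use finK single_K in auto)

lemma cls_in: "v \<in> V \<Longrightarrow> v \<in> cls v"
  unfolding cls_def using single_K by auto

lemma K_sub_cls: "U \<in> K \<Longrightarrow> v \<in> U \<Longrightarrow> U \<subseteq> cls v"
  unfolding cls_def by auto

lemma cls_V: "cls v \<subseteq> V"
  unfolding cls_def K_def by auto

lemma cls_eq: assumes "v \<in> V" "w \<in> cls v" shows "cls w = cls v"
proof -
  have w: "w \<in> V" using assms cls_V by auto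
  have "cls v \<subseteq> cls w" using K_sub_cls[OF cls_K[OF assms(1)] assms(2)] .
  moreover have "cls w \<subseteq> cls v"
    using K_sub_cls[OF cls_K[OF w], of v] \<open>cls v \<subseteq> cls w\<close> cls_in[OF assms(1)] by blast
  ultimately show ?thesis by blast
qed

lemma cls_overlap: "a \<in> V \<Longrightarrow> b \<in> V \<Longrightarrow> x \<in> cls a \<Longrightarrow> x \<in> cls b \<Longrightarrow> cls a = cls b"
  using cls_eq by metis

definition W where "W = {e. k_weak ends V E k e}"

lemma strong_in_cls:
  assumes "e \<in> E" "e \<notin> W"
  shows "\<exists>v\<in>V. ends e \<subseteq> cls v"
proof -
  have "enat k \<le> strength ends V E e" using assms unfolding W_def k_weak_def by auto
  hence "enat (k - 1) < strength ends V E e" using kpos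
    by (metis Suc_diff_1 Suc_ile_eq)
  then obtain U where U: "ends e \<subseteq> U" "U \<subseteq> V"
     "enat (k-1) < edge_conn ends U (induced_edges ends E U)"
    unfolding strength_def less_SUP_iff by auto
  hence "enat k \<le> edge_conn ends U (induced_edges ends E U)" using kpos
    by (metis Suc_diff_1 Suc_ile_eq)
  hence UK: "U \<in> K" using U unfolding K_def by auto
  obtain v where "v \<in> ends e" using endsne[OF assms(1)] by auto
  thus ?thesis using K_sub_cls[OF UK, of v] U by blast
qed

lemma weak_not_in_cls:
  assumes "e \<in> W" "v \<in> V"
  shows "\<not> ends e \<subseteq> cls v"
proof
  assume a: "ends e \<subseteq> cls v"
  have "edge_conn ends (cls v) (induced_edges ends E (cls v)) \<le> strength ends V E e"
    unfolding strength_def by (rule SUP_upper) (use a cls_V in auto)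
  moreover have "enat k \<le> edge_conn ends (cls v) (induced_edges ends E (cls v))"
    using cls_K[OF assms(2)] unfolding K_def by auto
  ultimately show False using assms(1) unfolding W_def k_weak_def by auto
qed

lemma W_E: "W \<subseteq> E" unfolding W_def k_weak_def by auto


definition closed where "closed U \<longleftrightarrow> (\<forall>v\<in>U. cls v \<subseteq> U)"
definition Cl where "Cl = cls ` V"
definition N where "N U = card {C\<in>Cl. C \<subseteq> U}"
definition WI where "WI U = {e\<in>W. ends e \<subseteq> U}"

lemma finCl: "finite Cl" unfolding Cl_def using finV by auto

lemma count:
  assumes "U \<subseteq> V" "U \<noteq> {}" "closed U"
  shows "card (WI U) + (k-1) \<le> (k-1) * N U"
  using assms
proof (induction "card U" arbitrary: U rule: less_induct)
  case less
  have finU: "finite U" using less.prems(1) finV finite_subset by blast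
  obtain u where u: "u \<in> U" using less.prems(2) by blast
  have uV: "u \<in> V" using u less.prems(1) by blast
  show ?case
  proof (cases "U \<subseteq> cls u")
    case True
    have w0: "WI U = {}" unfolding WI_def using weak_not_in_cls[OF _ uV] True by blast
    have "cls u \<in> {C\<in>Cl. C \<subseteq> U}" using less.prems(3) u uV unfolding closed_def Cl_def by blast
    moreover have "finite {C\<in>Cl. C \<subseteq> U}" using finCl by simp
    ultimately have "1 \<le> N U" unfolding N_def
      by (metis One_nat_def Suc_leI card_gt_0_iff empty_iff)
    thus ?thesis using w0 by simp
  next
    case False
    have "U \<notin> K" using False K_sub_cls u by blast
    then obtain A where A: "{} \<subset> A" "A \<subset> U" "card (cut ends U (induced_edges ends E U) A) < k"
      using less.prems(1) unfolding K_iff by (meson not_le)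
    define B where "B = U - A"
    have clA: "closed A"
      unfolding closed_def
    proof
      fix a assume a: "a \<in> A"
      have aV: "a \<in> V" using a A less.prems(1) by blast
      have sub: "cls a \<subseteq> U" using less.prems(3) a A unfolding closed_def by blast
      show "cls a \<subseteq> A"
      proof (rule ccontr)
        assume "\<not> cls a \<subseteq> A"
        hence "k \<le> card (cut ends U (induced_edges ends E U) A)"
          using K_cut[OF cls_K[OF aV] sub] cls_in[OF aV] a by blast
        thus False using A(3) by simp
      qed
    qed
    have clB: "closed B"
      unfolding closed_def
    proof
      fix b assume b: "b \<in> B"
      have bV: "b \<in> V" using b less.prems(1) unfolding B_def by blast
      have sub: "cls b \<subseteq> U" using less.prems(3) b unfolding closed_def B_def by blast
      show "cls b \<subseteq> B"
      proof (rule ccontr)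
        assume "\<not> cls b \<subseteq> B"
        then obtain x where x: "x \<in> cls b" "x \<in> A" using sub unfolding B_def by blast
        have "cls x = cls b" using cls_eq[OF bV x(1)] .
        hence "b \<in> A" using clA x(2) cls_in[OF bV] unfolding closed_def by blast
        thus False using b unfolding B_def by blast
      qed
    qed
    have Ane: "A \<noteq> {}" "B \<noteq> {}" using A unfolding B_def by blast+
    have AV: "A \<subseteq> V" "B \<subseteq> V" using A less.prems(1) unfolding B_def by blast+
    have cA: "card A < card U" using A(2) finU by (meson psubset_card_mono)
    have "B \<subset> U" unfolding B_def using A by blast
    hence cB: "card B < card U" using finU by (meson psubset_card_mono)
    have IHA: "card (WI A) + (k-1) \<le> (k-1) * N A" using less.hyps[OF cA AV(1) Ane(1) clA] .
    have IHB: "card (WI B) + (k-1) \<le> (k-1) * N B" using less.hyps[OF cB AV(2) Ane(2) clB] .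
    have WIsub: "WI U \<subseteq> cut ends U (induced_edges ends E U) A \<union> WI A \<union> WI B"
    proof
      fix e assume e: "e \<in> WI U"
      hence eE: "e \<in> E" "ends e \<subseteq> U" "e \<in> W" using W_E unfolding WI_def by auto
      show "e \<in> cut ends U (induced_edges ends E U) A \<union> WI A \<union> WI B"
      proof (cases "ends e \<inter> A \<noteq> {} \<and> ends e \<inter> (U - A) \<noteq> {}")
        case True thus ?thesis using eE unfolding cut_def induced_edges_def by blast
      next
        case False thus ?thesis using eE unfolding WI_def B_def by blast
      qed
    qed
    have finWI: "finite (WI X)" for X
    proof -
      have "WI X \<subseteq> E" using W_E unfolding WI_def by blast
      thus ?thesis using finE finite_subset by blast
    qed
    have "card (WI U) \<le> card (cut ends U (induced_edges ends E U) A \<union> WI A \<union> WI B)"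
      by (rule card_mono) (use finWI fin_cut WIsub in auto)
    also have "\<dots> \<le> card (cut ends U (induced_edges ends E U) A) + card (WI A) + card (WI B)"
      by (metis (no_types, lifting) add_le_mono card_Un_le le_refl order_trans)
    finally have c1: "card (WI U) \<le> card (cut ends U (induced_edges ends E U) A) + card (WI A) + card (WI B)" .
    have clsU: "{C\<in>Cl. C \<subseteq> U} = {C\<in>Cl. C \<subseteq> A} \<union> {C\<in>Cl. C \<subseteq> B}"
    proof (intro equalityI subsetI)
      fix C assume C: "C \<in> {C\<in>Cl. C \<subseteq> U}"
      then obtain v where v: "v \<in> V" "C = cls v" unfolding Cl_def by blast
      have "v \<in> U" using C v cls_in by blast
      thus "C \<in> {C\<in>Cl. C \<subseteq> A} \<union> {C\<in>Cl. C \<subseteq> B}"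
        using clA clB C v unfolding closed_def B_def by blast
    qed (use A(2) in \<open>auto simp: B_def\<close>)
    have disj: "{C\<in>Cl. C \<subseteq> A} \<inter> {C\<in>Cl. C \<subseteq> B} = {}"
    proof -
      have "C \<noteq> {}" if "C \<in> Cl" for C using that cls_in unfolding Cl_def by blast
      thus ?thesis unfolding B_def by blast
    qed
    have "N U = N A + N B" unfolding N_def clsU
      by (rule card_Un_disjoint) (use finCl disj in auto)
    hence "(k-1) * N U = (k-1) * N A + (k-1) * N B" by (simp add: add_mult_distrib2)
    thus ?thesis using c1 IHA IHB A(3) by linarith
  qed
qed


lemma card_ends: "e \<in> E \<Longrightarrow> card (ends e) \<le> hrank ends E"
  unfolding hrank_def by (rule Max_ge) (use finE in auto)

lemma M_bound_aux:
  assumes R: "R \<subseteq> W" and M: "M = {C\<in>Cl. \<exists>e\<in>R. ends e \<inter> C \<noteq> {}}"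
  shows "card R \<le> k * card M"
proof (cases "M = {}")
  case True
  have "R = {}"
  proof (rule ccontr)
    assume "R \<noteq> {}"
    then obtain e where e: "e \<in> R" by blast
    have eE: "e \<in> E" using e R W_E by blast
    obtain x where x: "x \<in> ends e" using endsne[OF eE] by blast
    have xV: "x \<in> V" using x endsV[OF eE] by blast
    have "cls x \<in> M" unfolding M Cl_def using e x xV cls_in by blast
    thus False using True by blast
  qed
  thus ?thesis by simp
next
  case False
  define U where "U = \<Union>M"
  have MCl: "M \<subseteq> Cl" using M by blast
  have UV: "U \<subseteq> V" unfolding U_def using MCl cls_V unfolding Cl_def by blast
  have Une: "U \<noteq> {}"
  proof -
    obtain C where C: "C \<in> M" using False by blast
    then obtain c where "c \<in> V" "C = cls c" using MCl unfolding Cl_def by blast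
    thus ?thesis using C cls_in unfolding U_def by blast
  qed
  have clU: "closed U" unfolding closed_def
  proof
    fix v assume v: "v \<in> U"
    then obtain C where C: "C \<in> M" "v \<in> C" unfolding U_def by blast
    then obtain c where c: "c \<in> V" "C = cls c" using MCl unfolding Cl_def by blast
    have "cls v = C" using cls_eq[OF c(1)] C(2) c(2) by blast
    thus "cls v \<subseteq> U" using C unfolding U_def by blast
  qed
  have NU: "{C\<in>Cl. C \<subseteq> U} = M"
  proof (intro equalityI subsetI)
    fix C assume C: "C \<in> {C\<in>Cl. C \<subseteq> U}"
    then obtain c where c: "c \<in> V" "C = cls c" unfolding Cl_def by blast
    have "c \<in> U" using C c cls_in by blast
    then obtain C' where C': "C' \<in> M" "c \<in> C'" unfolding U_def by blast
    then obtain c' where c': "c' \<in> V" "C' = cls c'" using MCl unfolding Cl_def by blast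
    have "C = C'" using cls_overlap[OF c(1) c'(1)] c c' C' cls_in[OF c(1)] by blast
    thus "C \<in> M" using C' by blast
  next
    fix C assume "C \<in> M" thus "C \<in> {C\<in>Cl. C \<subseteq> U}" using MCl unfolding U_def by blast
  qed
  have RWI: "R \<subseteq> WI U"
  proof
    fix e assume e: "e \<in> R"
    have eE: "e \<in> E" using e R W_E by blast
    have "ends e \<subseteq> U"
    proof
      fix x assume x: "x \<in> ends e"
      have xV: "x \<in> V" using x endsV[OF eE] by blast
      have "cls x \<in> M" unfolding M Cl_def using e x xV cls_in by blast
      thus "x \<in> U" using cls_in[OF xV] unfolding U_def by blast
    qed
    thus "e \<in> WI U" using e R unfolding WI_def by blast
  qed
  have finWI: "finite (WI U)"
  proof -
    have "WI U \<subseteq> E" using W_E unfolding WI_def by blast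
    thus ?thesis using finE finite_subset by blast
  qed
  have "card R \<le> card (WI U)" by (rule card_mono[OF finWI RWI])
  also have "\<dots> \<le> (k-1) * N U" using count[OF UV Une clU] by linarith
  also have "\<dots> = (k-1) * card M" unfolding N_def NU ..
  also have "\<dots> \<le> k * card M" by simp
  finally show ?thesis .
qed

lemma card_filter_sum: "finite A \<Longrightarrow> card {x\<in>A. Q x} = (\<Sum>x\<in>A. if Q x then 1 else (0::nat))"
  by (simp add: sum.If_cases Int_def conj_commute)

lemma deg_sum:
  assumes R: "R \<subseteq> W" and MCl: "M \<subseteq> Cl"
  shows "(\<Sum>C\<in>M. card {e\<in>R. ends e \<inter> C \<noteq> {}}) \<le> hrank ends E * card R"
proof -
  have finR: "finite R" using R W_E by (intro finite_subset[OF _ finE]) blast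
  have finM: "finite M" using MCl by (intro finite_subset[OF _ finCl])
  have "(\<Sum>C\<in>M. card {e\<in>R. ends e \<inter> C \<noteq> {}})
      = (\<Sum>C\<in>M. \<Sum>e\<in>R. if ends e \<inter> C \<noteq> {} then 1 else (0::nat))"
    using finR by (simp add: card_filter_sum)
  also have "\<dots> = (\<Sum>e\<in>R. \<Sum>C\<in>M. if ends e \<inter> C \<noteq> {} then 1 else (0::nat))"
    by (rule sum.swap)
  also have "\<dots> = (\<Sum>e\<in>R. card {C\<in>M. ends e \<inter> C \<noteq> {}})"
    using finM by (simp add: card_filter_sum)
  also have "\<dots> \<le> (\<Sum>e\<in>R. hrank ends E)"
  proof (rule sum_mono)
    fix e assume e: "e \<in> R"
    have eE: "e \<in> E" using e R W_E by blast
    have fin: "finite (ends e)" using endsV[OF eE] by (intro finite_subset[OF _ finV])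
    have "{C\<in>M. ends e \<inter> C \<noteq> {}} \<subseteq> cls ` ends e"
    proof
      fix C assume C: "C \<in> {C\<in>M. ends e \<inter> C \<noteq> {}}"
      then obtain c where c: "c \<in> V" "C = cls c" using MCl unfolding Cl_def by blast
      obtain x where x: "x \<in> ends e" "x \<in> C" using C by blast
      have "cls x = C" using cls_eq[OF c(1)] x c by blast
      thus "C \<in> cls ` ends e" using x by blast
    qed
    hence "card {C\<in>M. ends e \<inter> C \<noteq> {}} \<le> card (cls ` ends e)"
      by (rule card_mono[rotated]) (use fin in auto)
    also have "\<dots> \<le> card (ends e)" by (rule card_image_le[OF fin])
    also have "\<dots> \<le> hrank ends E" by (rule card_ends[OF eE])
    finally show "card {C\<in>M. ends e \<inter> C \<noteq> {}} \<le> hrank ends E" .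
  qed
  also have "\<dots> = hrank ends E * card R" by simp
  finally show ?thesis .
qed


end

locale setting2 = setting ends V E k
  for ends :: "'e \<Rightarrow> 'a set" and V :: "'a set" and E :: "'e set" and k :: nat +
  fixes P :: "'a set \<Rightarrow> 'e set \<Rightarrow> nat \<Rightarrow> 'e set"
  assumes partition: "\<And>(V'::'a set) (E'::'e set) t. hypergraph ends V' E' \<Longrightarrow>
        light ends V' E' (2 * t) (P V' E' t) \<and> t_partition ends V' E' t (P V' E' t)"
begin

definition t where "t = 2 * hrank ends E * k"
definition EI where "EI i = weak_edges_iter P V E t i"
definition R where "R i = W - EI i"
definition M where "M i = {C\<in>Cl. \<exists>e\<in>R i. ends e \<inter> C \<noteq> {}}"
definition deg where "deg i C = card {e\<in>R i. ends e \<inter> C \<noteq> {}}"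

lemma hyp_sub: "E' \<subseteq> E \<Longrightarrow> hypergraph ends V E'"
  using H finite_subset unfolding hypergraph_def by blast

lemma EI_Suc: "EI (Suc i) = EI i \<union> P V (E - EI i) t"
  unfolding EI_def by simp

lemma light_iter:
  "EI i \<subseteq> E \<and> int (card (EI i)) \<le> int (2 * t) * (int (ncomp ends V (E - EI i)) - int (ncomp ends V E))"
proof (induction i)
  case 0 thus ?case unfolding EI_def by simp
next
  case (Suc i)
  define F where "F = P V (E - EI i) t"
  have hl: "light ends V (E - EI i) (2 * t) F" using partition[OF hyp_sub[of "E - EI i"]] unfolding F_def by blast
  hence F: "F \<subseteq> E - EI i"
    "int (card F) \<le> int (2 * t) * (int (ncomp ends V ((E - EI i) - F)) - int (ncomp ends V (E - EI i)))"
    unfolding light_def by auto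
  have eq: "E - EI (Suc i) = (E - EI i) - F" unfolding EI_Suc F_def by blast
  have "card (EI (Suc i)) \<le> card (EI i) + card F" unfolding EI_Suc F_def[symmetric] by (rule card_Un_le)
  hence "int (card (EI (Suc i))) \<le> int (card (EI i)) + int (card F)" by linarith
  moreover have "EI (Suc i) \<subseteq> E" using Suc F unfolding EI_Suc F_def by blast
  ultimately show ?case using Suc F(2) unfolding eq by (simp add: algebra_simps)
qed

lemma M_Cl: "M i \<subseteq> Cl" unfolding M_def by blast
lemma R_W: "R i \<subseteq> W" unfolding R_def by blast

lemma card_R: "card (R i) \<le> k * card (M i)"
  by (rule M_bound_aux[OF R_W M_def])

lemma M_Suc_high:
  assumes C: "C \<in> M (Suc i)"
  shows "C \<in> M i \<and> t \<le> deg i C"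
proof -
  obtain e where e: "e \<in> R (Suc i)" "ends e \<inter> C \<noteq> {}" "C \<in> Cl" using C unfolding M_def by blast
  have eR: "e \<in> R i" using e(1) unfolding R_def EI_Suc by blast
  have CM: "C \<in> M i" using eR e unfolding M_def by blast
  obtain c where c: "c \<in> V" "C = cls c" using e(3) unfolding Cl_def by blast
  have eW: "e \<in> W" using eR unfolding R_def by blast
  have eE: "e \<in> E" using eW W_E by blast
  have finR: "finite (R i)" using R_W W_E by (intro finite_subset[OF _ finE]) blast
  have cutsub: "cut ends V (E - EI i) C \<subseteq> {f\<in>R i. ends f \<inter> C \<noteq> {}}"
  proof
    fix f assume f: "f \<in> cut ends V (E - EI i) C"
    hence f1: "f \<in> E" "f \<notin> EI i" "ends f \<inter> C \<noteq> {}" "ends f \<inter> (V - C) \<noteq> {}"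
      unfolding cut_def by auto
    have "f \<in> W"
    proof (rule ccontr)
      assume "f \<notin> W"
      then obtain v where v: "v \<in> V" "ends f \<subseteq> cls v" using strong_in_cls f1(1) by blast
      obtain x where x: "x \<in> ends f" "x \<in> C" using f1(3) by blast
      have "cls v = cls c" using cls_overlap[OF v(1) c(1)] x v c by blast
      thus False using v c f1(4) by blast
    qed
    thus "f \<in> {f\<in>R i. ends f \<inter> C \<noteq> {}}" using f1 unfolding R_def by blast
  qed
  show ?thesis
  proof (rule ccontr)
    assume "\<not> (C \<in> M i \<and> t \<le> deg i C)"
    hence lt: "deg i C < t" using CM by simp
    have "card (cut ends V (E - EI i) C) \<le> deg i C"
      unfolding deg_def by (rule card_mono[OF _ cutsub]) (use finR in simp)
    hence lt2: "card (cut ends V (E - EI i) C) < t" using lt by simp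
    have "\<not> ends e \<subseteq> C" using weak_not_in_cls[OF eW c(1)] c by simp
    hence "ends e \<inter> (V - C) \<noteq> {}" using endsV[OF eE] by blast
    hence ecut: "e \<in> cut ends V (E - EI i) C" using eR e(2) eE unfolding cut_def R_def by blast
    have CV: "C \<subseteq> V" using c cls_V by simp
    have "crisp ends V (E - EI i) t e" unfolding crisp_def using CV ecut lt2 by blast
    moreover have "t_partition ends V (E - EI i) t (P V (E - EI i) t)"
      using partition[OF hyp_sub[of "E - EI i"]] by blast
    ultimately have "e \<in> P V (E - EI i) t" using eR eE unfolding t_partition_def R_def by blast
    hence "e \<in> EI (Suc i)" unfolding EI_Suc by blast
    thus False using e(1) unfolding R_def by blast
  qed
qed

lemma halve:
  assumes r: "0 < hrank ends E"
  shows "2 * card (M (Suc i)) \<le> card (M i)"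
proof -
  define Hi where "Hi = {C\<in>M i. t \<le> deg i C}"
  have finM: "finite (M i)" using M_Cl by (intro finite_subset[OF _ finCl])
  have sub: "M (Suc i) \<subseteq> Hi" using M_Suc_high unfolding Hi_def by blast
  have finH: "finite Hi" using finM unfolding Hi_def by simp
  have "card Hi * t = (\<Sum>C\<in>Hi. t)" by simp
  also have "\<dots> \<le> (\<Sum>C\<in>Hi. deg i C)" by (rule sum_mono) (simp add: Hi_def)
  also have "\<dots> \<le> (\<Sum>C\<in>M i. deg i C)" by (rule sum_mono2[OF finM]) (auto simp: Hi_def)
  also have "\<dots> \<le> hrank ends E * card (R i)" unfolding deg_def by (rule deg_sum[OF R_W M_Cl])
  also have "\<dots> \<le> hrank ends E * (k * card (M i))" using card_R by simp
  finally have "card Hi * (2 * (hrank ends E * k)) \<le> card (M i) * (hrank ends E * k)"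
    unfolding t_def by (simp add: algebra_simps)
  hence "2 * card Hi \<le> card (M i)" using r kpos by simp
  moreover have "card (M (Suc i)) \<le> card Hi" by (rule card_mono[OF finH sub])
  ultimately show ?thesis by simp
qed

lemma pow_M:
  assumes r: "0 < hrank ends E"
  shows "2 ^ i * card (M i) \<le> card V"
proof (induction i)
  case 0
  have "card (M 0) \<le> card Cl" by (rule card_mono[OF finCl M_Cl])
  also have "\<dots> \<le> card V" unfolding Cl_def by (rule card_image_le[OF finV])
  finally show ?case by simp
next
  case (Suc i)
  have "2 ^ i * (2 * card (M (Suc i))) \<le> 2 ^ i * card (M i)"
    by (rule mult_le_mono2[OF halve[OF r]])
  moreover have "2 ^ Suc i * card (M (Suc i)) = 2 ^ i * (2 * card (M (Suc i)))" by simp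
  ultimately show ?case using Suc by linarith
qed


lemma pow_bound: "card V < 2 ^ (1 + nat \<lceil>log 2 (real (card V))\<rceil>)"
proof (cases "card V = 0")
  case True thus ?thesis by simp
next
  case False
  define m where "m = card V"
  have m1: "real m \<ge> 1" using False unfolding m_def by simp
  have lg: "log 2 (real m) \<ge> 0" using m1 by simp
  have c: "log 2 (real m) \<le> real (nat \<lceil>log 2 (real m)\<rceil>)" using lg by linarith
  have "real m = 2 powr (log 2 (real m))" using m1 by simp
  also have "\<dots> \<le> 2 powr (real (nat \<lceil>log 2 (real m)\<rceil>))" by (rule powr_mono[OF c]) simp
  also have "\<dots> = 2 ^ (nat \<lceil>log 2 (real m)\<rceil>)" by (simp add: powr_realpow)
  finally have "real m \<le> 2 ^ (nat \<lceil>log 2 (real m)\<rceil>)" .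
  hence "m \<le> 2 ^ (nat \<lceil>log 2 (real m)\<rceil>)"
    by (metis of_nat_le_iff of_nat_numeral of_nat_power)
  moreover have "0 < (2::nat) ^ (nat \<lceil>log 2 (real m)\<rceil>)" by simp
  ultimately have "m < 2 * 2 ^ (nat \<lceil>log 2 (real m)\<rceil>)" by linarith
  thus ?thesis unfolding m_def by simp
qed

lemma all_weak:
  assumes r: "0 < hrank ends E"
  shows "W \<subseteq> EI (1 + nat \<lceil>log 2 (real (card V))\<rceil>)"
proof -
  define n where "n = 1 + nat \<lceil>log 2 (real (card V))\<rceil>"
  have "2 ^ n * card (M n) \<le> card V" by (rule pow_M[OF r])
  moreover have "card V < 2 ^ n" using pow_bound unfolding n_def .
  ultimately have "card (M n) = 0"
  proof -
    assume a1: "2 ^ n * card (M n) \<le> card V" and a2: "card V < 2 ^ n"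
    show "card (M n) = 0"
    proof (rule ccontr)
      assume "card (M n) \<noteq> 0"
      hence "2 ^ n * 1 \<le> 2 ^ n * card (M n)" by (intro mult_le_mono2) simp
      thus False using a1 a2 by linarith
    qed
  qed
  moreover have "finite (M n)" using M_Cl by (intro finite_subset[OF _ finCl])
  ultimately have "M n = {}" by simp
  moreover have "finite (R n)" using R_W W_E by (intro finite_subset[OF _ finE]) blast
  ultimately have "R n = {}" using M_bound_aux[OF R_W M_def, of n] by simp
  thus ?thesis unfolding R_def n_def by blast
qed

end

theorem theorem3p3:
  fixes ends :: "'e \<Rightarrow> 'a set"
    and P :: "'a set \<Rightarrow> 'e set \<Rightarrow> nat \<Rightarrow> 'e set"
    and V :: "'a set" and E :: "'e set" and k :: nat
  assumes H: "hypergraph ends V E"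
    and k: "k > 0"
    and partition: "\<And>V' E' t. hypergraph ends V' E' \<Longrightarrow>
        light ends V' E' (2 * t) (P V' E' t) \<and> t_partition ends V' E' t (P V' E' t)"
  shows "light ends V E (4 * hrank ends E * k) (weak_edges ends P V E k)
       \<and> (\<forall>e\<in>E. k_weak ends V E k e \<longrightarrow> e \<in> weak_edges ends P V E k)"
proof -
  interpret S: setting2 ends V E k P
    by unfold_locales (use H k partition in auto)
  define n where "n = 1 + nat \<lceil>log 2 (real (card V))\<rceil>"
  have we: "weak_edges ends P V E k = S.EI n"
    unfolding weak_edges_def S.EI_def S.t_def n_def ..
  have L: "light ends V E (4 * hrank ends E * k) (weak_edges ends P V E k)"
  proof -
    have "S.EI n \<subseteq> E \<and> int (card (S.EI n)) \<le> int (2 * S.t) * (int (ncomp ends V (E - S.EI n)) - int (ncomp ends V E))"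
      by (rule S.light_iter)
    moreover have "2 * S.t = 4 * hrank ends E * k" unfolding S.t_def by simp
    ultimately show ?thesis unfolding light_def we by simp
  qed
  have Wk: "\<forall>e\<in>E. k_weak ends V E k e \<longrightarrow> e \<in> weak_edges ends P V E k"
  proof (intro ballI impI)
    fix e assume e: "e \<in> E" "k_weak ends V E k e"
    have fin: "finite (ends e)" using S.endsV[OF e(1)] by (intro finite_subset[OF _ S.finV])
    have "0 < card (ends e)" using fin S.endsne[OF e(1)] by (simp add: card_gt_0_iff)
    hence r: "0 < hrank ends E" using S.card_ends[OF e(1)] by linarith
    have "e \<in> S.W" unfolding S.W_def using e(2) by simp
    thus "e \<in> weak_edges ends P V E k" using S.all_weak[OF r] unfolding we n_def by blast
  qed
  show ?thesis using L Wk by blast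
qed

end
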